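(* In the disclosure game described in the context, for any information structure $(X,\pi^S)$ with $\varnothing\notin X$, an equilibrium exists, and in every equilibrium $(\sigma,(\mu^B_m))$ the distribution of Buyer's posterior mean $q^B_{\sigma(x)}$ (with $x$ distributed according to the signal distribution) equals $\mu^S$.
   Context: Let $0<q_\ell<q_h<\infty$, $Q=[q_\ell,q_h]$, and let $c$ be a real number with $0<c<q_\ell$. Let $F$ be a probability distribution on $[0,1]$ with support $[0,1]$ admitting a twice continuously differentiable density $f:(0,1)\to\mathbb{R}_{>0}$. Define $r(v)=(1-F(v))/f(v)$ and $\psi(v)=v-r(v)$ on $(0,1)$, and assume $\psi'(v)>0$ whenever $\psi(v)>0$. For $q\in Q$, $p(q)$ is the unique maximizer over $p\in\mathbb{R}$ of $(p-c)\big(1-F(p/q)\big)$, and let $R(q)=(p(q)-c)\big(1-F(p(q)/q)\big)$. The quality $q$ is drawn from a prior $\mu\in\Delta(Q)$ with support $Q$. Seller's information structure $(X,\pi^S)$ consists of a measurable signal space $X$ with $\varnothing\notin X$ and $\pi^S:Q\to\Delta(X)$; on observing $x$, Seller forms the Bayesian posterior $\mu^S_x$, and $\mu^S$ is the distribution of $\mathbb{E}_{\mu^S_x}[q]$. A disclosure strategy is a measurable $\sigma:X\to X\cup\{\varnothing\}$ with $\sigma(x)\in\{x,\varnothing\}$ for all $x$. Buyer's beliefs are $(\mu^B_m)_{m\in X\cup\{\varnothing\}}$ with posterior means $q^B_m=\mathbb{E}_{\mu^B_m}[q]$. A pair $(\sigma,(\mu^B_m))$ is an equilibrium if (i) for every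 $x\in X$, $\sigma(x)\in\arg\max_{m\in\{x,\varnothing\}} R(q^B_m)$; and (ii) $\mu^B_m=\mu^S_m$ for $m\in X$, and $\mu^B_\varnothing=\mathbb{E}[\mu^S_x\mid\sigma(x)=\varnothing]$ when this conditional expectation is well defined (otherwise $\mu^B_\varnothing$ is arbitrary). *)

theory Defs
  imports "HOL-Probability.Probability"
begin

definition measure_support :: "real measure \<Rightarrow> real set" where
  "measure_support M = \<Inter>{S. closed S \<and> emeasure M (UNIV - S) = 0}"

definition rr :: "(real \<Rightarrow> real) \<Rightarrow> (real \<Rightarrow> real) \<Rightarrow> real \<Rightarrow> real" where
  "rr F f v = (1 - F v) / f v"

definition virt :: "(real \<Rightarrow> real) \<Rightarrow> (real \<Rightarrow> real) \<Rightarrow> real \<Rightarrow> real" where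
  "virt F f v = v - rr F f v"

definition profit :: "real \<Rightarrow> (real \<Rightarrow> real) \<Rightarrow> real \<Rightarrow> real \<Rightarrow> real" where
  "profit c F q p = (p - c) * (1 - F (p / q))"

definition price :: "real \<Rightarrow> (real \<Rightarrow> real) \<Rightarrow> real \<Rightarrow> real" where
  "price c F q = (THE p. \<forall>p'. profit c F q p' \<le> profit c F q p)"

definition RR :: "real \<Rightarrow> (real \<Rightarrow> real) \<Rightarrow> real \<Rightarrow> real" where
  "RR c F q = profit c F q (price c F q)"

definition dist_on :: "real set \<Rightarrow> real measure \<Rightarrow> bool" where
  "dist_on Q M \<longleftrightarrow> prob_space M \<and> sets M = sets borel \<and> emeasure M Q = 1"

definition pmean :: "real measure \<Rightarrow> real" where
  "pmean M = (\<integral>q. q \<partial>M)"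

definition signal_dist :: "real measure \<Rightarrow> (real \<Rightarrow> 'x measure) \<Rightarrow> 'x measure" where
  "signal_dist mu piS = mu \<bind> piS"

text \<open>Bayesian posterior kernel: the joint law of (q,x) computed from prior and
  signal kernel coincides with the one computed from the signal marginal and
  the posterior kernel (Bayes' rule / disintegration).\<close>
definition bayes_posterior ::
  "real measure \<Rightarrow> 'x measure \<Rightarrow> (real \<Rightarrow> 'x measure) \<Rightarrow> ('x \<Rightarrow> real measure) \<Rightarrow> bool" where
  "bayes_posterior mu SX piS K \<longleftrightarrow>
     K \<in> measurable SX (prob_algebra borel) \<and>
     signal_dist mu piS \<bind> (\<lambda>x. K x \<bind> (\<lambda>q. return (borel \<Otimes>\<^sub>M SX) (q, x)))
       = mu \<bind> (\<lambda>q. piS q \<bind> (\<lambda>x. return (borel \<Otimes>\<^sub>M SX) (q, x)))"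

definition seller_means :: "real measure \<Rightarrow> (real \<Rightarrow> 'x measure) \<Rightarrow> ('x \<Rightarrow> real measure) \<Rightarrow> real measure" where
  "seller_means mu piS K = distr (signal_dist mu piS) borel (\<lambda>x. pmean (K x))"

text \<open>Disclosure strategy: messages are 'x option, with None standing for
  the empty message. sig x is Some x (disclose) or None (conceal); measurability
  w.r.t. the disjoint-union sig-algebra on X + {empty} amounts to measurability of
  the concealment set.\<close>
definition disclosure_strategy :: "'x measure \<Rightarrow> ('x \<Rightarrow> 'x option) \<Rightarrow> bool" where
  "disclosure_strategy SX sig \<longleftrightarrow>
     (\<forall>x\<in>space SX. sig x = Some x \<or> sig x = None) \<and>
     {x\<in>space SX. sig x = None} \<in> sets SX"

definition cond_mixture :: "'x measure \<Rightarrow> ('x \<Rightarrow> real measure) \<Rightarrow> 'x set \<Rightarrow> real measure" where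
  "cond_mixture nu K D = density nu (\<lambda>x. indicator D x / emeasure nu D) \<bind> K"

definition equilibrium ::
  "real \<Rightarrow> (real \<Rightarrow> real) \<Rightarrow> real set \<Rightarrow> real measure \<Rightarrow> 'x measure \<Rightarrow> (real \<Rightarrow> 'x measure)
   \<Rightarrow> ('x \<Rightarrow> real measure) \<Rightarrow> ('x \<Rightarrow> 'x option) \<Rightarrow> ('x option \<Rightarrow> real measure) \<Rightarrow> bool" where
  "equilibrium c F Q mu SX piS K sig muB \<longleftrightarrow>
     disclosure_strategy SX sig \<and>
     \<comment> \<open>(i) optimality of disclosure\<close>
     (\<forall>x\<in>space SX. RR c F (pmean (muB (sig x))) =
         max (RR c F (pmean (muB (Some x)))) (RR c F (pmean (muB None)))) \<and>
     \<comment> \<open>(ii) consistency of beliefs\<close>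
     (\<forall>x\<in>space SX. muB (Some x) = K x) \<and>
     dist_on Q (muB None) \<and>
     (let D = {x\<in>space SX. sig x = None} in
        emeasure (signal_dist mu piS) D > 0 \<longrightarrow>
          muB None = cond_mixture (signal_dist mu piS) K D)"

end

theory Submission
  imports Defs
begin

lemma F_facts:
  fixes F f :: "real \<Rightarrow> real"
  assumes fcont: "continuous_on {0<..<1} f"
  and f_int: "set_integrable lborel {0<..<1} f" and tot: "(LBINT v:{0<..<1}. f v) = 1"
  and F_cdf: "\<forall>v. F v = (LBINT u:{0<..<1} \<inter> {..v}. f u)"
  shows "\<And>v. v \<le> 0 \<Longrightarrow> F v = 0" "\<And>v. v \<ge> 1 \<Longrightarrow> F v = 1"
    "continuous_on {0..1} F" "\<And>v. v \<in> {0<..<1} \<Longrightarrow> DERIV F v :> f v"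
proof -
  show "F v = 0" if "v \<le> 0" for v
  proof -
    have "{0<..<1} \<inter> {..v} = ({}::real set)" using that by auto
    then show ?thesis using F_cdf by (simp add: set_lebesgue_integral_def)
  qed
  show "F v = 1" if "v \<ge> 1" for v
  proof -
    have "{0<..<1} \<inter> {..v} = ({0<..<1}::real set)" using that by auto
    then show ?thesis using F_cdf tot by simp
  qed
  have Fint: "F v = integral {0..v} f" if "v \<in> {0..1}" for v
  proof -
    have si: "set_integrable lborel ({0<..<1} \<inter> {..v}) f"
      by (rule set_integrable_subset[OF f_int]) auto
    have "F v = integral ({0<..<1} \<inter> {..v}) f"
      using F_cdf set_borel_integral_eq_integral(2)[OF si] by simp
    also have "\<dots> = integral {0..v} f"
      by (rule integral_spike_set; rule negligible_subset[of "{0,1}"]) (use that in auto)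
    finally show ?thesis .
  qed
  have fi01: "f integrable_on {0..1}"
  proof -
    have "f integrable_on {0<..<1}" using set_borel_integral_eq_integral(1)[OF f_int] .
    then show ?thesis
      by (rule integrable_spike_set) (auto intro: negligible_subset[of "{0,1}"])
  qed
  show "continuous_on {0..1} F"
    using indefinite_integral_continuous_1[OF fi01] continuous_on_cong Fint by (smt (verit))
  show "DERIV F x :> f x" if x: "x \<in> {0<..<1}" for x
  proof -
    define a b where "a = x/2" and "b = (1+x)/2"
    have ab: "0 < a" "a < x" "x < b" "b < 1" using x by (auto simp: a_def b_def)
    have fc: "continuous_on {a..b} f" using fcont by (rule continuous_on_subset) (use ab in auto)
    have "((\<lambda>u. integral {a..u} f) has_vector_derivative f x) (at x within {a..b})"
      by (rule integral_has_vector_derivative[OF fc]) (use ab in auto)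
    then have "((\<lambda>u. integral {a..u} f) has_vector_derivative f x) (at x within {a<..<b})"
      by (rule has_vector_derivative_within_subset) auto
    then have "((\<lambda>u. integral {a..u} f) has_vector_derivative f x) (at x)"
      using has_vector_derivative_within_open[of x "{a<..<b}"] ab by auto
    then have d1: "((\<lambda>u. integral {0..a} f + integral {a..u} f) has_field_derivative f x) (at x)"
      by (auto simp: has_real_derivative_iff_has_vector_derivative intro!: derivative_eq_intros)
    show ?thesis
    proof (rule has_field_derivative_transform_within_open[OF d1, of "{a<..<b}"])
      fix u assume u: "u \<in> {a<..<b}"
      have "integral {0..a} f + integral {a..u} f = integral {0..u} f"
        by (rule Henstock_Kurzweil_Integration.integral_combine) (use u ab in \<open>auto intro: integrable_subinterval_real[OF fi01]\<close>)
      also have "\<dots> = F u" using Fint[of u] u ab by auto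
      finally show "integral {0..a} f + integral {a..u} f = F u" .
    qed (use ab in auto)
  qed
qed

lemma one_crossing:
  fixes g :: "real \<Rightarrow> real"
  assumes ab: "a < b" and gc: "continuous_on {a..b} g" and ga: "g a = k" and gb: "g b = k"
    and der: "\<And>v. v \<in> {a..b} \<Longrightarrow> g v = k \<Longrightarrow> \<exists>d>0. DERIV g v :> d"
  shows False
proof -
  obtain d0 where d0: "d0 > 0" "DERIV g a :> d0" using der[of a] ga ab by auto
  obtain d1 where d1: "d1 > 0" "\<forall>h>0. h < d1 \<longrightarrow> g a < g (a + h)"
    using DERIV_pos_inc_right[OF d0(2) d0(1)] by blast
  define e where "e = min (d1/2) ((b-a)/2)"
  have e: "e > 0" "e < d1" "a + e < b" using d1(1) ab unfolding e_def by (auto simp: min_def field_simps)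
  have gae: "g (a+e) > k" using d1 e ga by auto
  define S where "S = {a+e..b} \<inter> g -` {..k}"
  have Sc: "closed S" unfolding S_def
    by (rule continuous_closed_preimage) (use e(1) in \<open>auto intro: continuous_on_subset[OF gc]\<close>)
  have bS: "b \<in> S" using e gb by (auto simp: S_def)
  have Sbdd: "bdd_below S" unfolding S_def by (auto intro: bdd_belowI[of _ "a+e"])
  define w where "w = Inf S"
  have wS: "w \<in> S" unfolding w_def using closed_contains_Inf[OF _ Sbdd Sc] bS by auto
  have wle: "\<And>v. v \<in> S \<Longrightarrow> w \<le> v" unfolding w_def using Sbdd by (simp add: cInf_lower)
  have w1: "a + e \<le> w" "w \<le> b" "g w \<le> k" using wS by (auto simp: S_def)
  have "\<exists>x. a + e \<le> x \<and> x \<le> w \<and> g x = k"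
    by (rule IVT2') (use w1 gae e(1) in \<open>auto intro: continuous_on_subset[OF gc]\<close>)
  then obtain x where x: "a + e \<le> x" "x \<le> w" "g x = k" by blast
  have "x \<in> S" using x w1 by (auto simp: S_def)
  then have "x = w" using wle x by force
  then have gw: "g w = k" using x by simp
  have wgt: "w > a + e" using gw gae w1 by (cases "w = a + e") auto
  obtain d2 where d2: "d2 > 0" "DERIV g w :> d2" using der[of w] gw w1 e by auto
  obtain d3 where d3: "d3 > 0" "\<forall>h>0. h < d3 \<longrightarrow> g (w - h) < g w"
    using DERIV_pos_inc_left[OF d2(2) d2(1)] by blast
  define h where "h = min (d3/2) ((w - (a+e))/2)"
  have h: "h > 0" "h < d3" "w - h \<ge> a + e" using d3(1) wgt unfolding h_def by (auto simp: min_def field_simps)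
  have "g (w - h) < k" using d3 h gw by auto
  then have "w - h \<in> S" using h w1 by (auto simp: S_def)
  then show False using wle h by force
qed

lemma RR_strict_mono:
  fixes F f :: "real \<Rightarrow> real" and c :: real
  assumes c: "0 < c"
  and fpos: "\<forall>v\<in>{0<..<1}. f v > 0"
  and fder: "\<forall>v\<in>{0<..<1}. \<exists>d. DERIV f v :> d"
  and f_int: "set_integrable lborel {0<..<1} f" and tot: "(LBINT v:{0<..<1}. f v) = 1"
  and F_cdf: "\<forall>v. F v = (LBINT u:{0<..<1} \<inter> {..v}. f u)"
  and psi_mono: "\<forall>v\<in>{0<..<1}. virt F f v > 0 \<longrightarrow> deriv (virt F f) v > 0"
  shows "\<And>q q'. c < q \<Longrightarrow> q < q' \<Longrightarrow> RR c F q < RR c F q'"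
proof -
  have fcont: "continuous_on {0<..<1} f"
    by (rule continuous_at_imp_continuous_on) (use fder DERIV_isCont in blast)
  note FF = F_facts[OF fcont f_int tot F_cdf]
  have Finc: "F a < F b" if "0 \<le> a" "a < b" "b \<le> 1" for a b
  proof (rule DERIV_pos_imp_increasing_open[OF \<open>a < b\<close>])
    fix x assume "a < x" "x < b"
    then have x: "x \<in> {0<..<1}" using that by auto
    show "\<exists>y. DERIV F x :> y \<and> y > 0" using FF(4)[OF x] fpos x by blast
  qed (use that in \<open>auto intro: continuous_on_subset[OF FF(3)]\<close>)
  have Fclamp: "F v = F (max 0 (min v 1))" for v
    using FF(1,2) by (cases "v \<le> 0"; cases "v \<ge> 1") (auto simp: max_def min_def)
  have Fmono: "F a \<le> F b" if "a \<le> b" for a b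
  proof -
    have "F (max 0 (min a 1)) \<le> F (max 0 (min b 1))"
      using Finc[of "max 0 (min a 1)" "max 0 (min b 1)"] that
      by (cases "max 0 (min a 1) = max 0 (min b 1)") (auto simp: max_def min_def)
    then show ?thesis using Fclamp[of a] Fclamp[of b] by simp
  qed
  have Flt1: "F v < 1" if "v < 1" for v
  proof (cases "v \<le> 0")
    case True then show ?thesis using FF(1) by simp
  next
    case False then show ?thesis using Finc[of v 1] FF(2)[of 1] that by simp
  qed
  have Fle1: "F v \<le> 1" for v
    using Fmono[of v "max v 1"] FF(2)[of "max v 1"] by simp
  have psi_der: "DERIV (virt F f) v :> deriv (virt F f) v" if v: "v \<in> {0<..<1}" for v
  proof -
    obtain d where d: "DERIV f v :> d" using fder v by blast
    have "(virt F f) differentiable (at v)"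
      unfolding virt_def[abs_def] rr_def
      using differentiableI[OF d[unfolded has_field_derivative_def]]
            differentiableI[OF FF(4)[OF v, unfolded has_field_derivative_def]] fpos v
      by (intro differentiable_diff differentiable_divide differentiable_const differentiable_ident) (auto, force)
    then show ?thesis using DERIV_deriv_iff_real_differentiable by blast
  qed
  have psi_cont: "continuous_on {a..b} (virt F f)" if "0 < a" "b < 1" for a b
  proof (rule continuous_at_imp_continuous_on, rule ballI)
    fix x assume "x \<in> {a..b}"
    then have "x \<in> {0<..<1}" using that by auto
    then show "isCont (virt F f) x" using psi_der DERIV_isCont by blast
  qed
  have char: "(\<exists>!p. \<forall>p'. profit c F q p' \<le> profit c F q p) \<and>
     (\<forall>p. (\<forall>p'. profit c F q p' \<le> profit c F q p) \<longrightarrow> c < p \<and> p < q)" if q: "c < q" for q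
  proof -
    let ?P = "profit c F q"
    have qpos: "q > 0" using q c by simp
    have Ppos: "?P p > 0" if "c < p" "p < q" for p
      using that Flt1[of "p/q"] qpos by (simp add: profit_def)
    have Pnp: "?P p \<le> 0" if "\<not> (c < p \<and> p < q)" for p
    proof (cases "p \<le> c")
      case True then show ?thesis using Fle1[of "p/q"] by (simp add: profit_def mult_nonpos_nonneg)
    next
      case False
      then have "p/q \<ge> 1" using that qpos by simp
      then show ?thesis using FF(2) by (simp add: profit_def)
    qed
    have Pcont: "continuous_on {c..q} ?P"
    proof -
      have "continuous_on {c..q} (\<lambda>p. F (p/q))"
        by (rule continuous_on_compose2[OF FF(3)]) (use c qpos in \<open>auto intro!: continuous_intros simp: field_simps\<close>)
      then show ?thesis unfolding profit_def by (intro continuous_intros) auto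
    qed
    obtain p0 where p0: "p0 \<in> {c..q}" "\<forall>y\<in>{c..q}. ?P y \<le> ?P p0"
      using continuous_attains_sup[OF compact_Icc _ Pcont] q by auto
    have mid: "?P ((c+q)/2) > 0" using Ppos q by simp
    have p0max: "\<forall>y. ?P y \<le> ?P p0"
    proof
      fix y show "?P y \<le> ?P p0"
      proof (cases "y \<in> {c..q}")
        case True then show ?thesis using p0 by blast
      next
        case False
        then have "?P y \<le> 0" using Pnp by auto
        moreover have "?P ((c+q)/2) \<le> ?P p0" using p0 q by auto
        ultimately show ?thesis using mid by linarith
      qed
    qed
    have inside: "c < p \<and> p < q" if "\<forall>p'. ?P p' \<le> ?P p" for p
      using that[rule_format, of "(c+q)/2"] mid Pnp[of p] by (cases "c < p \<and> p < q") auto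
    have foc: "virt F f (p/q) = c/q" if pm: "\<forall>p'. ?P p' \<le> ?P p" for p
    proof -
      have pin: "c < p" "p < q" using inside[OF pm] by auto
      have v: "p/q \<in> {0<..<1}" using pin c qpos by auto
      have d1: "DERIV (\<lambda>p. F (p/q)) p :> f (p/q) * (1/q)"
        by (rule DERIV_chain2[of F "f (p/q)" "\<lambda>p. p/q" p, OF FF(4)[OF v]]) (use qpos in \<open>auto intro!: derivative_eq_intros\<close>)
      have d2: "DERIV ?P p :> (1 - 0) * (1 - F (p/q)) + (0 - f (p/q) * (1/q)) * (p - c)"
        unfolding profit_def
      proof (rule DERIV_mult)
        show "DERIV (\<lambda>x. x - c) p :> 1 - 0" by (intro DERIV_diff DERIV_ident DERIV_const)
        show "DERIV (\<lambda>x. 1 - F (x / q)) p :> 0 - f (p / q) * (1 / q)" by (intro DERIV_diff DERIV_const d1)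
      qed
      have "(1 - 0) * (1 - F (p/q)) + (0 - f (p/q) * (1/q)) * (p - c) = 0"
        by (rule DERIV_local_max[OF d2, of 1]) (use pm in auto)
      then have e: "1 - F (p/q) = f (p/q) * (p - c) / q" by (simp add: field_simps)
      have fv: "f (p/q) > 0" using fpos v by auto
      show ?thesis unfolding virt_def rr_def e using fv qpos by (simp add: field_simps)
    qed
    have uniq: "p1 = p2" if "\<forall>p'. ?P p' \<le> ?P p1" "\<forall>p'. ?P p' \<le> ?P p2" for p1 p2
    proof (rule ccontr)
      assume ne: "p1 \<noteq> p2"
      have gen: False if a: "\<forall>p'. ?P p' \<le> ?P a" and b: "\<forall>p'. ?P p' \<le> ?P b" and ab: "a < b" for a b
      proof -
        have ia: "c < a" "a < q" and ib: "c < b" "b < q" using inside[OF a] inside[OF b] by auto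
        have kpos: "c/q > 0" using c qpos by simp
        show False
        proof (rule one_crossing[of "a/q" "b/q" "virt F f" "c/q"])
          show "a/q < b/q" using ab qpos by (simp add: divide_strict_right_mono)
          show "continuous_on {a/q..b/q} (virt F f)" by (rule psi_cont) (use ia ib c qpos in auto)
          show "virt F f (a/q) = c/q" by (rule foc[OF a])
          show "virt F f (b/q) = c/q" by (rule foc[OF b])
          fix v assume v: "v \<in> {a/q..b/q}" "virt F f v = c/q"
          have v01: "v \<in> {0<..<1}"
          proof -
            have "a/q > 0" "b/q < 1" using ia ib c qpos by auto
            then show ?thesis using v(1) by auto
          qed
          show "\<exists>d>0. DERIV (virt F f) v :> d"
          proof (intro exI conjI)
            show "DERIV (virt F f) v :> deriv (virt F f) v" by (rule psi_der[OF v01])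
            show "deriv (virt F f) v > 0" using psi_mono v01 v(2) kpos by auto
          qed
        qed
      qed
      show False using ne gen[OF that(1,2)] gen[OF that(2,1)] by linarith
    qed
    show ?thesis using p0max uniq inside by blast
  qed
  fix q q' assume qq: "c < q" "q < q'"
  have c1: "\<forall>p'. profit c F q p' \<le> profit c F q (price c F q)"
    unfolding price_def using theI'[OF conjunct1[OF char[OF qq(1)]]] by simp
  have c2: "\<forall>p'. profit c F q' p' \<le> profit c F q' (price c F q')"
    unfolding price_def using theI'[OF conjunct1[OF char]] qq by simp
  define p where "p = price c F q"
  have pin: "c < p" "p < q" using conjunct2[OF char[OF qq(1)]] c1 unfolding p_def by blast+
  have "F (p/q') < F (p/q)"
    by (rule Finc) (use pin qq c in \<open>auto simp: field_simps\<close>)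
  then have "profit c F q p < profit c F q' p"
    using pin by (simp add: profit_def)
  also have "\<dots> \<le> RR c F q'" using c2 unfolding RR_def by blast
  finally show "RR c F q < RR c F q'" unfolding RR_def p_def .
qed

lemma dist_on_facts:
  fixes N :: "real measure"
  assumes d: "dist_on {a..b} N" and a: "0 \<le> a"
  shows "pmean N \<in> {a..b}" "(\<integral>\<^sup>+q. ennreal q \<partial>N) = ennreal (pmean N)" "integrable N (\<lambda>q. q)"
proof -
  have ps: "prob_space N" and sN: "sets N = sets borel" and e1: "emeasure N {a..b} = 1"
    using d by (auto simp: dist_on_def)
  interpret prob_space N by (rule ps)
  have ev: "{a..b} \<in> events" using sN by simp
  have "prob {a..b} = 1" using e1 emeasure_eq_measure by simp
  then have AE: "AE q in N. q \<in> {a..b}" using AE_in_set_eq_1[OF ev] by simp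
  have meas: "(\<lambda>q. q) \<in> borel_measurable N" using sN measurable_cong_sets[OF sN refl] by simp
  show int: "integrable N (\<lambda>q. q)"
    by (rule integrable_const_bound[where B=b]) (use AE a meas in \<open>auto elim!: AE_mp\<close>)
  have "a \<le> pmean N" unfolding pmean_def by (rule integral_ge_const[OF int]) (use AE in \<open>auto elim!: AE_mp\<close>)
  moreover have "pmean N \<le> b" unfolding pmean_def by (rule integral_le_const[OF int]) (use AE in \<open>auto elim!: AE_mp\<close>)
  ultimately show "pmean N \<in> {a..b}" by simp
  show "(\<integral>\<^sup>+q. ennreal q \<partial>N) = ennreal (pmean N)" unfolding pmean_def
    by (rule nn_integral_eq_integral[OF int]) (use AE a in \<open>auto elim!: AE_mp\<close>)
qed

theorem proposition6:
  fixes ql qh c :: real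
    and F f :: "real \<Rightarrow> real"
    and mu :: "real measure"
    and SX :: "'x measure"
    and piS :: "real \<Rightarrow> 'x measure"
    and K :: "'x \<Rightarrow> real measure"
  assumes "0 < ql" and "ql < qh" and "0 < c" and "c < ql"
    and f_pos: "\<forall>v\<in>{0<..<1}. f v > 0"
    and f_C2: "\<exists>f' f''. (\<forall>v\<in>{0<..<1}. (f has_real_derivative f' v) (at v) \<and>
                                   (f' has_real_derivative f'' v) (at v))
                     \<and> continuous_on {0<..<1} f''"
    and f_dens: "set_integrable lborel {0<..<1} f" "(LBINT v:{0<..<1}. f v) = 1"
    and F_cdf: "\<forall>v. F v = (LBINT u:{0<..<1} \<inter> {..v}. f u)"
    and psi_mono: "\<forall>v\<in>{0<..<1}. virt F f v > 0 \<longrightarrow> deriv (virt F f) v > 0"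
    and mu_prob: "prob_space mu" and mu_sets: "sets mu = sets borel"
    and mu_supp: "measure_support mu = {ql..qh}"
    and pi_kernel: "piS \<in> measurable borel (prob_algebra SX)"
    and K_post: "bayes_posterior mu SX piS K"
    and K_Q: "\<forall>x\<in>space SX. dist_on {ql..qh} (K x)"
  shows "(\<exists>sig muB. equilibrium c F {ql..qh} mu SX piS K sig muB) \<and>
         (\<forall>sig muB. equilibrium c F {ql..qh} mu SX piS K sig muB \<longrightarrow>
            distr (signal_dist mu piS) borel (\<lambda>x. pmean (muB (sig x))) = seller_means mu piS K)"
proof -
  have fder: "\<forall>v\<in>{0<..<1}. \<exists>d. DERIV f v :> d" using f_C2 by blast
  note mono = RR_strict_mono[OF \<open>0 < c\<close> f_pos fder f_dens F_cdf psi_mono]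
  have RRle: "RR c F q \<le> RR c F q'" if "q \<in> {ql..qh}" "q \<le> q'" for q q'
    using mono[of q q'] that \<open>c < ql\<close> by (cases "q = q'") auto
  have RRle_imp: "q \<le> q'" if "q' \<in> {ql..qh}" "RR c F q \<le> RR c F q'" for q q'
    using mono[of q' q] that \<open>c < ql\<close> by force
  have ql0: "0 \<le> ql" using \<open>0 < ql\<close> by simp
  let ?nu = "signal_dist mu piS"
  have mu_sp: "mu \<in> space (prob_algebra borel)" using mu_prob mu_sets by (simp add: space_prob_algebra)
  have nu_ps: "prob_space ?nu" unfolding signal_dist_def by (rule prob_space_bind'[OF mu_sp pi_kernel])
  have nu_sets: "sets ?nu = sets SX" unfolding signal_dist_def by (rule sets_bind'[OF mu_sp pi_kernel])
  have nu_space: "space ?nu = space SX" using nu_sets by (rule sets_eq_imp_space_eq)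
  have nu_meq: "(borel_measurable ?nu :: ('x \<Rightarrow> real) set) = borel_measurable SX"
    by (rule measurable_cong_sets[OF nu_sets refl])
  have Kmeas: "K \<in> SX \<rightarrow>\<^sub>M prob_algebra borel" using K_post by (simp add: bayes_posterior_def)
  have phimeas: "(\<lambda>x. pmean (K x)) \<in> borel_measurable SX"
    unfolding pmean_def
    by (rule measurable_compose[OF measurable_prob_algebraD[OF Kmeas] integral_measurable_subprob_algebra]) simp
  have phi_in: "pmean (K x) \<in> {ql..qh}" if "x \<in> space SX" for x
    using dist_on_facts(1)[OF _ ql0] K_Q that by blast
  show ?thesis
  proof
    show "\<exists>sig muB. equilibrium c F {ql..qh} mu SX piS K sig muB"
    proof (intro exI)
      let ?muB = "\<lambda>m. case m of None \<Rightarrow> return borel ql | Some x \<Rightarrow> K x"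
      have pr: "pmean (return borel ql) = ql" unfolding pmean_def by (rule integral_return) auto
      show "equilibrium c F {ql..qh} mu SX piS K Some ?muB"
        unfolding equilibrium_def disclosure_strategy_def Let_def
      proof (intro conjI ballI impI)
        fix x assume x: "x \<in> space SX"
        show "RR c F (pmean (?muB (Some x))) = max (RR c F (pmean (?muB (Some x)))) (RR c F (pmean (?muB None)))"
          using RRle[of ql "pmean (K x)"] phi_in[OF x] pr \<open>ql < qh\<close> by (simp add: max_def)
      next
        show "dist_on {ql..qh} (?muB None)"
          using \<open>ql < qh\<close> by (auto simp: dist_on_def prob_space_return)
      next
        assume "0 < emeasure ?nu {x \<in> space SX. Some x = None}"
        then show "?muB None = cond_mixture ?nu K {x \<in> space SX. Some x = None}" by simp
      qed auto
    qed
  next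
    show "\<forall>sig muB. equilibrium c F {ql..qh} mu SX piS K sig muB \<longrightarrow>
            distr ?nu borel (\<lambda>x. pmean (muB (sig x))) = seller_means mu piS K"
    proof (intro allI impI)
      fix sig muB assume eq: "equilibrium c F {ql..qh} mu SX piS K sig muB"
      define D where "D = {x \<in> space SX. sig x = None}"
      have ds: "disclosure_strategy SX sig" using eq by (simp add: equilibrium_def)
      have Dm: "D \<in> sets SX" using ds by (simp add: disclosure_strategy_def D_def)
      have sigv: "\<And>x. x \<in> space SX \<Longrightarrow> x \<notin> D \<Longrightarrow> sig x = Some x"
        using ds by (auto simp: disclosure_strategy_def D_def)
      have opt: "\<And>x. x \<in> space SX \<Longrightarrow> RR c F (pmean (muB (sig x))) =
         max (RR c F (pmean (muB (Some x)))) (RR c F (pmean (muB None)))"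
        using eq by (simp add: equilibrium_def)
      have mS: "\<And>x. x \<in> space SX \<Longrightarrow> muB (Some x) = K x" using eq by (simp add: equilibrium_def)
      have dN: "dist_on {ql..qh} (muB None)" using eq by (simp add: equilibrium_def)
      have cm: "emeasure ?nu D > 0 \<Longrightarrow> muB None = cond_mixture ?nu K D"
        using eq by (simp add: equilibrium_def D_def Let_def)
      define qn where "qn = pmean (muB None)"
      have qn_in: "qn \<in> {ql..qh}" unfolding qn_def using dist_on_facts(1)[OF dN ql0] .
      have eqf: "pmean (muB (sig x)) = (if x \<in> D then qn else pmean (K x))" if "x \<in> space SX" for x
        using sigv[OF that] mS[OF that] that by (auto simp: D_def qn_def)
      have meas1: "(\<lambda>x. pmean (muB (sig x))) \<in> borel_measurable ?nu"
      proof -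
        have "(\<lambda>x. if x \<in> D then qn else pmean (K x)) \<in> borel_measurable SX"
          using Dm phimeas by measurable
        then have "(\<lambda>x. pmean (muB (sig x))) \<in> borel_measurable SX"
          using measurable_cong[of SX "\<lambda>x. pmean (muB (sig x))", OF eqf] by simp
        then show ?thesis using nu_meq by simp
      qed
      have meas2: "(\<lambda>x. pmean (K x)) \<in> borel_measurable ?nu"
        using phimeas nu_meq by simp
      have AEeq: "AE x in ?nu. pmean (muB (sig x)) = pmean (K x)"
      proof (cases "emeasure ?nu D > 0")
        case False
        then have "D \<in> null_sets ?nu" using Dm nu_sets by (auto simp: null_sets_def)
        then have "AE x in ?nu. x \<notin> D" by (rule AE_not_in)
        then show ?thesis by (rule AE_mp) (rule AE_I2, use eqf nu_space in auto)
      next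
        case True
        have dnu: "muB None = cond_mixture ?nu K D" using cm True by simp
        interpret nu: prob_space ?nu by (rule nu_ps)
        define m where "m = measure ?nu D"
        have em: "emeasure ?nu D = ennreal m" unfolding m_def by (rule nu.emeasure_eq_measure)
        have mpos: "m > 0" using True em by simp
        define w where "w = (\<lambda>x. indicator D x / m :: real)"
        have wnn: "\<And>x. w x \<ge> 0" using mpos by (simp add: w_def)
        have dens_eq: "(\<lambda>x. indicator D x / emeasure ?nu D) = (\<lambda>x. ennreal (w x))"
        proof
          fix x show "indicator D x / emeasure ?nu D = ennreal (w x)"
          proof (cases "x \<in> D")
            case True
            then show ?thesis using divide_ennreal[of 1 m] mpos by (simp add: w_def em)
          next
            case False
            then show ?thesis by (simp add: w_def)
          qed
        qed
        let ?M' = "density ?nu (\<lambda>x. ennreal (w x))"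
        have Dnu: "D \<in> sets ?nu" using Dm nu_sets by simp
        have phimeas_nu: "(\<lambda>x. pmean (K x)) \<in> borel_measurable ?nu" by (rule meas2)
        have wmeas: "w \<in> borel_measurable ?nu" unfolding w_def using Dnu by measurable
        have M'sets: "sets ?M' = sets SX" using nu_sets by simp
        have KM': "K \<in> ?M' \<rightarrow>\<^sub>M subprob_algebra borel"
          unfolding measurable_density_eq1
          by (subst measurable_cong_sets[OF nu_sets refl]) (rule measurable_prob_algebraD[OF Kmeas])
        have int1: "integrable ?nu (\<lambda>x. w x * pmean (K x))"
        proof (rule nu.integrable_const_bound[where B="qh / m"])
          show "AE x in ?nu. norm (w x * pmean (K x)) \<le> qh / m"
          proof (rule AE_I2)
            fix x assume x: "x \<in> space ?nu"
            then have p: "pmean (K x) \<in> {ql..qh}" using phi_in nu_space by auto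
            show "norm (w x * pmean (K x)) \<le> qh / m"
              using p mpos \<open>0 < ql\<close> by (cases "x \<in> D") (auto simp: w_def field_simps)
          qed
          show "(\<lambda>x. w x * pmean (K x)) \<in> borel_measurable ?nu"
            using wmeas phimeas_nu by (rule borel_measurable_times)
        qed
        have "ennreal qn = (\<integral>\<^sup>+q. ennreal q \<partial>(muB None))"
          using dist_on_facts(2)[OF dN ql0] qn_def by simp
        also have "\<dots> = (\<integral>\<^sup>+q. ennreal q \<partial>(?M' \<bind> K))"
          using dnu dens_eq by (simp add: cond_mixture_def)
        also have "\<dots> = (\<integral>\<^sup>+x. (\<integral>\<^sup>+q. ennreal q \<partial>K x) \<partial>?M')"
          by (rule nn_integral_bind[OF _ KM']) simp
        also have "\<dots> = (\<integral>\<^sup>+x. ennreal (pmean (K x)) \<partial>?M')"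
        proof (rule nn_integral_cong)
          fix x assume "x \<in> space ?M'"
          then have "x \<in> space SX" using nu_space by simp
          then show "(\<integral>\<^sup>+q. ennreal q \<partial>K x) = ennreal (pmean (K x))"
            using dist_on_facts(2)[OF _ ql0] K_Q by blast
        qed
        also have "\<dots> = (\<integral>\<^sup>+x. ennreal (w x) * ennreal (pmean (K x)) \<partial>?nu)"
          by (rule nn_integral_density; rule measurable_compose[OF _ measurable_ennreal])
             (use wmeas phimeas_nu in auto)
        also have "\<dots> = (\<integral>\<^sup>+x. ennreal (w x * pmean (K x)) \<partial>?nu)"
        proof (rule nn_integral_cong)
          fix x assume x: "x \<in> space ?nu"
          then have p: "pmean (K x) \<ge> 0" using phi_in nu_space \<open>0 < ql\<close> by force
          show "ennreal (w x) * ennreal (pmean (K x)) = ennreal (w x * pmean (K x))"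
            using ennreal_mult[OF wnn p] by simp
        qed
        also have "\<dots> = ennreal (\<integral>x. w x * pmean (K x) \<partial>?nu)"
        proof (rule nn_integral_eq_integral[OF int1], rule AE_I2)
          fix x assume x: "x \<in> space ?nu"
          then have p: "pmean (K x) \<ge> 0" using phi_in nu_space \<open>0 < ql\<close> by force
          show "0 \<le> w x * pmean (K x)" using wnn[of x] p by simp
        qed
        finally have e1: "ennreal qn = ennreal (\<integral>x. w x * pmean (K x) \<partial>?nu)" .
        have nn1: "0 \<le> (\<integral>x. w x * pmean (K x) \<partial>?nu)"
        proof (rule integral_nonneg_AE, rule AE_I2)
          fix x assume x: "x \<in> space ?nu"
          then have p: "pmean (K x) \<ge> 0" using phi_in nu_space \<open>0 < ql\<close> by force
          show "0 \<le> w x * pmean (K x)" using wnn[of x] p by simp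
        qed
        have qn_eq: "qn = (\<integral>x. w x * pmean (K x) \<partial>?nu)"
          using e1 nn1 qn_in \<open>0 < ql\<close> by (subst (asm) ennreal_inj) auto
        have int2: "integrable ?nu (\<lambda>x. indicator D x * pmean (K x))"
        proof -
          have "integrable ?nu (\<lambda>x. m * (w x * pmean (K x)))" using int1 by simp
          moreover have "(\<lambda>x. m * (w x * pmean (K x))) = (\<lambda>x. indicator D x * pmean (K x))"
            using mpos by (auto simp: w_def fun_eq_iff)
          ultimately show ?thesis by simp
        qed
        have i2: "(\<integral>x. indicator D x * pmean (K x) \<partial>?nu) = qn * m"
        proof -
          have "(\<integral>x. indicator D x * pmean (K x) \<partial>?nu) = (\<integral>x. m * (w x * pmean (K x)) \<partial>?nu)"
            using mpos by (intro Bochner_Integration.integral_cong) (auto simp: w_def)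
          also have "\<dots> = m * qn" using qn_eq by simp
          finally show ?thesis by simp
        qed
        have intD: "integrable ?nu (indicator D :: 'x \<Rightarrow> real)"
          using Dnu by (simp add: nu.emeasure_eq_measure)
        have i3: "(\<integral>x. indicator D x \<partial>?nu) = m" using Dnu by (simp add: m_def)
        define h where "h = (\<lambda>x. qn * indicator D x - indicator D x * pmean (K x))"
        have inth: "integrable ?nu h" unfolding h_def using intD int2 by simp
        have "integral\<^sup>L ?nu h = qn * m - qn * m"
          unfolding h_def using intD int2 i2 i3 by simp
        then have h0: "integral\<^sup>L ?nu h = 0" by simp
        have hnn: "AE x in ?nu. 0 \<le> h x"
        proof (rule AE_I2)
          fix x assume x: "x \<in> space ?nu"
          then have xs: "x \<in> space SX" using nu_space by simp
          show "0 \<le> h x"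
          proof (cases "x \<in> D")
            case True
            then have "sig x = None" by (simp add: D_def)
            then have "RR c F qn = max (RR c F (pmean (K x))) (RR c F qn)"
              using opt[OF xs] mS[OF xs] by (simp add: qn_def)
            then have "RR c F (pmean (K x)) \<le> RR c F qn" by (simp add: max_def split: if_splits)
            then have "pmean (K x) \<le> qn" using RRle_imp qn_in by blast
            then show ?thesis using True by (simp add: h_def)
          next
            case False then show ?thesis by (simp add: h_def)
          qed
        qed
        have "AE x in ?nu. h x = 0" using integral_nonneg_eq_0_iff_AE[OF inth hnn] h0 by simp
        then show ?thesis
        proof (rule AE_mp, intro AE_I2 impI)
          fix x assume x: "x \<in> space ?nu" and hx: "h x = 0"
          then have xs: "x \<in> space SX" using nu_space by simp
          show "pmean (muB (sig x)) = pmean (K x)"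
            using hx eqf[OF xs] by (cases "x \<in> D") (auto simp: h_def)
        qed
      qed
      show "distr ?nu borel (\<lambda>x. pmean (muB (sig x))) = seller_means mu piS K"
        unfolding seller_means_def
        by (rule distr_cong_AE[OF refl refl AEeq meas1 meas2])
    qed
  qed
qed

end
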